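(* Let $X$ be a finite-dimensional real vector space of dimension greater than two, let $\mathcal{P}$ and $\mathcal{Q}$ be two convex bodies in $X$ which contain the origin as an interior point, and let $W\subset X$ be a $1$-dimensional subspace. If the dual body $\mathcal{P}^*$ is strictly convex and for every hyperplane (linear subspace of codimension one) $Y\subset X$ containing $W$ the convex bodies $(\mathcal{P}\cap Y)^*$ and $(\mathcal{Q}\cap Y)^*$ in $Y^*$ are translates of each other, then $\mathcal{P}^*$ and $\mathcal{Q}^*$ are translates of each other in $X^*$.
   Context: For a convex body $\mathcal{P}$ in a vector space $X$ containing the origin as an interior point, its dual is $\mathcal{P}^*=\{\boldsymbol\xi\in X^*:\boldsymbol\xi(\mathbf{v})\le1\text{ for all }\mathbf{v}\in\mathcal{P}\}$; for a subspace $Y$, $(\mathcal{P}\cap Y)^*\subset Y^*$ is the dual of $\mathcal{P}\cap Y$ taken within $Y$. *)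

theory Defs
  imports "HOL-Analysis.Analysis"
begin

definition convex_body :: "'a::euclidean_space set \<Rightarrow> bool" where
  "convex_body S \<longleftrightarrow> compact S \<and> convex S \<and> interior S \<noteq> {}"

definition strictly_convex :: "'a::euclidean_space set \<Rightarrow> bool" where
  "strictly_convex S \<longleftrightarrow> convex S \<and>
     (\<forall>x\<in>S. \<forall>y\<in>S. x \<noteq> y \<longrightarrow> open_segment x y \<subseteq> interior S)"

text \<open>Dual of K taken within the subspace Y. Linear functionals on Y are represented
  (Riesz) by vectors of Y acting via the inner product. For Y = UNIV this is the dual body in X^*.\<close>
definition dual_in :: "'a::euclidean_space set \<Rightarrow> 'a set \<Rightarrow> 'a set" where
  "dual_in Y K = {\<xi> \<in> Y. \<forall>v\<in>K. \<xi> \<bullet> v \<le> 1}"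

definition translates_in :: "'a::euclidean_space set \<Rightarrow> 'a set \<Rightarrow> 'a set \<Rightarrow> bool" where
  "translates_in Y A B \<longleftrightarrow> (\<exists>t\<in>Y. A = (\<lambda>x. t + x) ` B)"

end

theory Submission
  imports Defs
begin

lemma proj_exists:
  fixes x :: "'a::euclidean_space"
  assumes "subspace Y"
  shows "\<exists>x'\<in>Y. \<forall>y\<in>Y. x' \<bullet> y = x \<bullet> y"
proof -
  obtain a b where ab: "a \<in> span Y" "\<And>w. w \<in> span Y \<Longrightarrow> orthogonal b w" "x = a + b"
    using orthogonal_subspace_decomp_exists by blast
  have "a \<in> Y" using ab(1) assms span_eq_iff by blast
  moreover have "\<forall>y\<in>Y. a \<bullet> y = x \<bullet> y"
  proof
    fix y assume "y \<in> Y"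
    then have "b \<bullet> y = 0" using ab(2)[of y] span_base[of y Y] by (simp add: orthogonal_def)
    then show "a \<bullet> y = x \<bullet> y" using ab(3) by (simp add: inner_add_left)
  qed
  ultimately show ?thesis by blast
qed

lemma restrict_in:
  assumes "\<xi> \<in> dual_in UNIV K" "\<eta> \<in> Y" "\<forall>y\<in>Y. \<eta> \<bullet> y = \<xi> \<bullet> y"
  shows "\<eta> \<in> dual_in Y (K \<inter> Y)"
  using assms unfolding dual_in_def by auto

lemma extend_dual:
  fixes K Y :: "'a::euclidean_space set"
  assumes cK: "convex K" and K0: "0 \<in> interior K" and sY: "subspace Y"
    and eY: "\<eta> \<in> dual_in Y (K \<inter> Y)"
  shows "\<exists>\<xi>. \<xi> \<in> dual_in UNIV K \<and> (\<forall>y\<in>Y. \<xi> \<bullet> y = \<eta> \<bullet> y)"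
proof (cases "\<eta> = 0")
  case True
  then show ?thesis by (intro exI[of _ 0]) (auto simp: dual_in_def)
next
  case False
  have etaY: "\<eta> \<in> Y" and eK: "\<And>v. v \<in> K \<Longrightarrow> v \<in> Y \<Longrightarrow> \<eta> \<bullet> v \<le> 1"
    using eY by (auto simp: dual_in_def)
  define L where "L = {v \<in> Y. \<eta> \<bullet> v = 1}"
  define l0 where "l0 = (1 / (\<eta> \<bullet> \<eta>)) *\<^sub>R \<eta>"
  have ee: "\<eta> \<bullet> \<eta> > 0" using False by simp
  have l0L: "l0 \<in> L" unfolding L_def l0_def using ee etaY sY
    by (simp add: subspace_scale)
  have cL: "convex L"
  proof -
    have "L = Y \<inter> {v. \<eta> \<bullet> v = 1}" unfolding L_def by auto
    then show ?thesis using convex_Int[OF subspace_imp_convex[OF sY] convex_hyperplane] by simp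
  qed
  have disj: "interior K \<inter> L = {}"
  proof (rule ccontr)
    assume "interior K \<inter> L \<noteq> {}"
    then obtain v where v: "v \<in> interior K" "v \<in> Y" "\<eta> \<bullet> v = 1" unfolding L_def by auto
    then have vn: "v \<noteq> 0" by auto
    obtain e where e: "e > 0" "ball v e \<subseteq> K" using v(1) mem_interior by blast
    define v' where "v' = (1 + e / (2 * norm v)) *\<^sub>R v"
    have "dist v v' = e / 2"
      unfolding v'_def dist_norm using vn e
      by (simp add: algebra_simps)
    then have "v' \<in> K" using e by auto
    moreover have "v' \<in> Y" unfolding v'_def using v(2) sY by (simp add: subspace_scale)
    moreover have "\<eta> \<bullet> v' > 1" unfolding v'_def using v(3) vn e
      by (simp add: inner_scaleR_right)
    ultimately show False using eK by force
  qed
  have neK: "interior K \<noteq> {}" using K0 by auto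
  obtain a b where ab: "a \<noteq> 0" "\<forall>x\<in>interior K. a \<bullet> x \<le> b" "\<forall>x\<in>L. a \<bullet> x \<ge> b"
    using separating_hyperplane_sets[OF convex_interior[OF cK] cL neK _ disj] l0L by blast
  have bpos: "b > 0"
  proof -
    obtain r where r: "r > 0" "ball 0 r \<subseteq> interior K"
      using K0 open_interior open_contains_ball by blast
    define x where "x = (r / (2 * norm a)) *\<^sub>R a"
    have "norm x = r / 2" unfolding x_def using ab(1) r by simp
    then have "x \<in> interior K" using r by auto
    then have "a \<bullet> x \<le> b" using ab(2) by auto
    moreover have "a \<bullet> x > 0" unfolding x_def using ab(1) r
      by (simp add: inner_scaleR_right)
    ultimately show ?thesis by simp
  qed
  have orth: "a \<bullet> d = 0" if d: "d \<in> Y" "\<eta> \<bullet> d = 0" for d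
  proof (rule ccontr)
    assume ad: "a \<bullet> d \<noteq> 0"
    define lam where "lam = (b - a \<bullet> l0 - 1) / (a \<bullet> d)"
    define l where "l = l0 + lam *\<^sub>R d"
    have "l \<in> L" using l0L d sY unfolding L_def l_def
      by (simp add: subspace_add subspace_scale inner_add_right)
    moreover have "a \<bullet> l = b - 1" unfolding l_def lam_def using ad
      by (simp add: inner_add_right)
    ultimately show False using ab(3) by force
  qed
  define c where "c = a \<bullet> l0"
  have cpos: "c > 0" using ab(3) l0L bpos unfolding c_def by force
  define \<xi> where "\<xi> = (1 / c) *\<^sub>R a"
  have el0: "\<eta> \<bullet> l0 = 1" using l0L unfolding L_def by simp
  have onY: "\<xi> \<bullet> y = \<eta> \<bullet> y" if y: "y \<in> Y" for y
  proof -
    define d where "d = y - (\<eta> \<bullet> y) *\<^sub>R l0"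
    have l0Y: "l0 \<in> Y" using l0L unfolding L_def by simp
    have dY: "d \<in> Y" unfolding d_def using y l0Y sY by (simp add: subspace_diff subspace_scale)
    have "\<eta> \<bullet> d = 0" unfolding d_def using el0 by (simp add: inner_diff_right)
    then have "a \<bullet> d = 0" using orth dY by blast
    then have "a \<bullet> y = (\<eta> \<bullet> y) * c" unfolding d_def c_def by (simp add: inner_diff_right)
    then show ?thesis unfolding \<xi>_def using cpos by simp
  qed
  have inK: "\<xi> \<bullet> v \<le> 1" if v: "v \<in> K" for v
  proof (rule field_le_mult_one_interval)
    fix z :: real assume z: "0 < z" "z < 1"
    have "v - (1 - z) *\<^sub>R (v - 0) \<in> interior K"
      using mem_interior_convex_shrink[OF cK K0 v, of "1 - z"] z by simp
    moreover have "v - (1 - z) *\<^sub>R (v - 0) = z *\<^sub>R v" by (simp add: algebra_simps)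
    ultimately have "a \<bullet> (z *\<^sub>R v) \<le> b" using ab(2) by auto
    then have "z * (a \<bullet> v) \<le> b" by simp
    moreover have "b \<le> c" using ab(3) l0L unfolding c_def by auto
    ultimately have "z * (a \<bullet> v) \<le> c" by simp
    then show "z * (\<xi> \<bullet> v) \<le> 1" unfolding \<xi>_def using cpos
      by (simp add: field_simps)
  qed
  show ?thesis using onY inK by (auto simp: dual_in_def)
qed

lemma compact_dual:
  fixes K :: "'a::euclidean_space set"
  assumes K0: "0 \<in> interior K"
  shows "compact (dual_in UNIV K)"
proof -
  obtain r where r: "r > 0" "cball 0 r \<subseteq> K"
    using K0 mem_interior_cball by blast
  have "dual_in UNIV K = (\<Inter>v\<in>K. {x. v \<bullet> x \<le> 1})"
    unfolding dual_in_def by (auto simp: inner_commute)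
  then have cl: "closed (dual_in UNIV K)" by (simp add: closed_INT closed_halfspace_le)
  have nb: "norm \<xi> \<le> 1 / r" if "\<xi> \<in> dual_in UNIV K" for \<xi>
  proof (cases "\<xi> = 0")
    case True then show ?thesis using r by simp
  next
    case False
    define v where "v = (r / norm \<xi>) *\<^sub>R \<xi>"
    have "norm v = r" unfolding v_def using False r by simp
    then have "v \<in> K" using r by auto
    then have "\<xi> \<bullet> v \<le> 1" using that by (auto simp: dual_in_def)
    moreover have "\<xi> \<bullet> v = r * norm \<xi>" unfolding v_def using False
      by (simp add: dot_square_norm power2_eq_square)
    ultimately have "r * norm \<xi> \<le> 1" by simp
    then show ?thesis using r by (simp add: pos_le_divide_eq mult.commute)
  qed
  have "bounded (dual_in UNIV K)" unfolding bounded_iff using nb by blast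
  then show ?thesis using cl by (simp add: compact_eq_bounded_closed)
qed

lemma hyperplane_through:
  fixes W :: "'a::euclidean_space set"
  assumes "DIM('a) > 2" "subspace W" "dim W = 1"
  shows "\<exists>Y. subspace Y \<and> dim Y = DIM('a) - 1 \<and> W \<subseteq> Y \<and> v \<in> Y"
proof -
  have "dim (insert v W) \<le> dim W + 1" by (simp add: dim_insert)
  then have "dim (insert v W) < DIM('a)" using assms(1,3) by linarith
  then obtain u where u: "u \<noteq> 0" "\<And>y. y \<in> span (insert v W) \<Longrightarrow> orthogonal u y"
    using orthogonal_to_subspace_exists by blast
  define Y where "Y = {x. u \<bullet> x = 0}"
  have "subspace Y" unfolding Y_def by (rule subspace_hyperplane)
  moreover have "dim Y = DIM('a) - 1" unfolding Y_def using u(1) by (rule dim_hyperplane)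
  moreover have "insert v W \<subseteq> Y"
  proof
    fix y assume "y \<in> insert v W"
    then have "y \<in> span (insert v W)" by (rule span_base)
    then have "orthogonal u y" by (rule u(2))
    then show "y \<in> Y" unfolding Y_def orthogonal_def by simp
  qed
  ultimately show ?thesis by blast
qed

theorem theorem4p5:
  fixes P Q W :: "'a::euclidean_space set"
  assumes "DIM('a) > 2"
    and "convex_body P" and "0 \<in> interior P"
    and "convex_body Q" and "0 \<in> interior Q"
    and "subspace W" and "dim W = 1"
    and "strictly_convex (dual_in UNIV P)"
    and "\<And>Y. subspace Y \<Longrightarrow> dim Y = DIM('a) - 1 \<Longrightarrow> W \<subseteq> Y \<Longrightarrow>
           translates_in Y (dual_in Y (P \<inter> Y)) (dual_in Y (Q \<inter> Y))"
  shows "translates_in UNIV (dual_in UNIV P) (dual_in UNIV Q)"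
proof -
  note dimA = assms(1) and P0 = assms(3) and Q0 = assms(5) and sW = assms(6) and dW = assms(7)
  note sc = assms(8) and tr = assms(9)
  have cP: "convex P" and cQ: "convex Q" using assms(2,4) by (auto simp: convex_body_def)
  define Pd where "Pd = dual_in UNIV P"
  define Qd where "Qd = dual_in UNIV Q"
  have "W \<noteq> {0}" using dW by auto
  moreover have "0 \<in> W" using sW by (simp add: subspace_0)
  ultimately obtain w where w: "w \<in> W" "w \<noteq> 0" by blast
  have cPd: "compact Pd" unfolding Pd_def using P0 by (rule compact_dual)
  have cQd: "compact Qd" unfolding Qd_def using Q0 by (rule compact_dual)
  have "0 \<in> Pd" "0 \<in> Qd" unfolding Pd_def Qd_def dual_in_def by auto
  have cw: "continuous_on S (\<lambda>x. x \<bullet> w)" for S by (intro continuous_intros)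
  obtain p where p: "p \<in> Pd" "\<And>y. y \<in> Pd \<Longrightarrow> y \<bullet> w \<le> p \<bullet> w"
    using continuous_attains_sup[OF cPd _ cw] \<open>0 \<in> Pd\<close> by blast
  obtain q where q: "q \<in> Qd" "\<And>y. y \<in> Qd \<Longrightarrow> y \<bullet> w \<le> q \<bullet> w"
    using continuous_attains_sup[OF cQd _ cw] \<open>0 \<in> Qd\<close> by blast
  have uniq: "\<xi> = p" if xi: "\<xi> \<in> Pd" "\<xi> \<bullet> w \<ge> p \<bullet> w" for \<xi>
  proof (rule ccontr)
    assume ne: "\<xi> \<noteq> p"
    define m where "m = midpoint \<xi> p"
    have "m \<in> open_segment \<xi> p" unfolding m_def using ne by simp
    then have "m \<in> interior Pd" using sc xi(1) p(1) ne unfolding strictly_convex_def Pd_def by blast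
    then obtain e where e: "e > 0" "ball m e \<subseteq> Pd" using mem_interior by blast
    define m' where "m' = m + (e / (2 * norm w)) *\<^sub>R w"
    have "dist m m' = e / 2" unfolding m'_def dist_norm using w e by simp
    then have "m' \<in> Pd" using e by auto
    then have "m' \<bullet> w \<le> p \<bullet> w" using p by blast
    moreover have "\<xi> \<bullet> w \<le> p \<bullet> w" using p xi by blast
    then have "m \<bullet> w = p \<bullet> w" using xi unfolding m_def midpoint_def
      by (simp add: inner_add_left)
    moreover have "m' \<bullet> w = m \<bullet> w + (e / (2 * norm w)) * (w \<bullet> w)"
      unfolding m'_def by (simp add: inner_add_left)
    moreover have "(e / (2 * norm w)) * (w \<bullet> w) > 0" using e w by simp
    ultimately show False by simp
  qed
  define s where "s = p - q"
  have key: "\<And>y. y \<in> Y \<Longrightarrow> t \<bullet> y = s \<bullet> y"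
    if Y: "subspace Y" "dim Y = DIM('a) - 1" "W \<subseteq> Y"
      and t: "dual_in Y (P \<inter> Y) = (\<lambda>x. t + x) ` dual_in Y (Q \<inter> Y)" for Y t
  proof -
    have wY: "w \<in> Y" using w Y by auto
    obtain q' where q': "q' \<in> Y" "\<forall>y\<in>Y. q' \<bullet> y = q \<bullet> y" using proj_exists[OF Y(1)] by blast
    obtain p' where p': "p' \<in> Y" "\<forall>y\<in>Y. p' \<bullet> y = p \<bullet> y" using proj_exists[OF Y(1)] by blast
    have "q' \<in> dual_in Y (Q \<inter> Y)" using restrict_in[of q Q q' Y] q(1) q' unfolding Qd_def by auto
    then have "t + q' \<in> dual_in Y (P \<inter> Y)" using t by auto
    then obtain \<xi> where xi: "\<xi> \<in> Pd" "\<forall>y\<in>Y. \<xi> \<bullet> y = (t + q') \<bullet> y"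
      using extend_dual[OF cP P0 Y(1)] unfolding Pd_def by blast
    have "p' \<in> dual_in Y (P \<inter> Y)" using restrict_in[of p P p' Y] p(1) p' unfolding Pd_def by auto
    then obtain b where b: "b \<in> dual_in Y (Q \<inter> Y)" "p' = t + b" using t by auto
    then obtain \<zeta> where ze: "\<zeta> \<in> Qd" "\<forall>y\<in>Y. \<zeta> \<bullet> y = b \<bullet> y"
      using extend_dual[OF cQ Q0 Y(1)] unfolding Qd_def by blast
    have "\<zeta> \<bullet> w = b \<bullet> w" using ze(2) wY by blast
    moreover have "p' \<bullet> w = p \<bullet> w" using p'(2) wY by blast
    ultimately have "\<zeta> \<bullet> w = p \<bullet> w - t \<bullet> w" using b(2) by (simp add: inner_add_left)
    then have "p \<bullet> w - t \<bullet> w \<le> q \<bullet> w" using q(2)[OF ze(1)] by simp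
    moreover have "\<xi> \<bullet> w = t \<bullet> w + q \<bullet> w" using xi(2) wY q' by (simp add: inner_add_left)
    ultimately have "\<xi> \<bullet> w \<ge> p \<bullet> w" by simp
    then have "\<xi> = p" using uniq xi(1) by blast
    then show "t \<bullet> y = s \<bullet> y" if "y \<in> Y" for y
      using xi(2) q' that unfolding s_def by (simp add: inner_add_left inner_diff_left)
  qed
  have fwd: "\<xi> - s \<in> Qd" if xi: "\<xi> \<in> Pd" for \<xi>
    unfolding Qd_def dual_in_def
  proof (intro CollectI conjI ballI UNIV_I)
    fix v assume v: "v \<in> Q"
    obtain Y where Y: "subspace Y" "dim Y = DIM('a) - 1" "W \<subseteq> Y" "v \<in> Y"
      using hyperplane_through[OF dimA sW dW] by blast
    obtain t where t: "dual_in Y (P \<inter> Y) = (\<lambda>x. t + x) ` dual_in Y (Q \<inter> Y)"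
      using tr[OF Y(1-3)] unfolding translates_in_def by blast
    obtain \<xi>' where x': "\<xi>' \<in> Y" "\<forall>y\<in>Y. \<xi>' \<bullet> y = \<xi> \<bullet> y" using proj_exists[OF Y(1)] by blast
    have "\<xi>' \<in> dual_in Y (P \<inter> Y)" using restrict_in[of \<xi> P \<xi>' Y] xi x' unfolding Pd_def by auto
    then obtain b where b: "b \<in> dual_in Y (Q \<inter> Y)" "\<xi>' = t + b" using t by auto
    have "b \<bullet> v \<le> 1" using b(1) v Y(4) by (auto simp: dual_in_def)
    moreover have "b \<bullet> v = \<xi> \<bullet> v - s \<bullet> v"
    proof -
      have "\<xi>' \<bullet> v = \<xi> \<bullet> v" using x'(2) Y(4) by blast
      then show ?thesis using b(2) key[OF Y(1-3) t Y(4)] by (simp add: inner_add_left)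
    qed
    ultimately show "(\<xi> - s) \<bullet> v \<le> 1" by (simp add: inner_diff_left)
  qed
  have bwd: "s + \<zeta> \<in> Pd" if ze: "\<zeta> \<in> Qd" for \<zeta>
    unfolding Pd_def dual_in_def
  proof (intro CollectI conjI ballI UNIV_I)
    fix v assume v: "v \<in> P"
    obtain Y where Y: "subspace Y" "dim Y = DIM('a) - 1" "W \<subseteq> Y" "v \<in> Y"
      using hyperplane_through[OF dimA sW dW] by blast
    obtain t where t: "dual_in Y (P \<inter> Y) = (\<lambda>x. t + x) ` dual_in Y (Q \<inter> Y)"
      using tr[OF Y(1-3)] unfolding translates_in_def by blast
    obtain \<zeta>' where z': "\<zeta>' \<in> Y" "\<forall>y\<in>Y. \<zeta>' \<bullet> y = \<zeta> \<bullet> y" using proj_exists[OF Y(1)] by blast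
    have "\<zeta>' \<in> dual_in Y (Q \<inter> Y)" using restrict_in[of \<zeta> Q \<zeta>' Y] ze z' unfolding Qd_def by auto
    then have "t + \<zeta>' \<in> dual_in Y (P \<inter> Y)" using t by auto
    then have "(t + \<zeta>') \<bullet> v \<le> 1" using v Y(4) by (auto simp: dual_in_def)
    moreover have "(t + \<zeta>') \<bullet> v = s \<bullet> v + \<zeta> \<bullet> v"
      using z' Y(4) key[OF Y(1-3) t Y(4)] by (simp add: inner_add_left)
    ultimately show "(s + \<zeta>) \<bullet> v \<le> 1" by (simp add: inner_add_left)
  qed
  have "Pd = (\<lambda>x. s + x) ` Qd"
  proof
    show "Pd \<subseteq> (\<lambda>x. s + x) ` Qd"
    proof
      fix \<xi> assume "\<xi> \<in> Pd"
      then have "\<xi> - s \<in> Qd" by (rule fwd)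
      then show "\<xi> \<in> (\<lambda>x. s + x) ` Qd" by (rule rev_image_eqI) simp
    qed
    show "(\<lambda>x. s + x) ` Qd \<subseteq> Pd" using bwd by auto
  qed
  then show ?thesis unfolding translates_in_def Pd_def Qd_def by blast
qed

end
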